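(* For every integer $n\ge 0$, \[ d_{n,q}(x)=\sum_{l=0}^{n}\Bigg(\sum_{m=l}^{n}(-1)^m\frac{2^{2m-l}}{m!}S_1(m,l)\,d_{n-m,q}\Bigg)x^l. \]
   Context: Let $p$ be a fixed odd prime, $\mathbb{C}_p$ the completion of the algebraic closure of $\mathbb{Q}_p$, with $|p|_p=1/p$. Let $q\in\mathbb{C}_p$ with $|1-q|_p<p^{-1/(p-1)}$, and $\log$ the $p$-adic logarithm. The numbers $d_{n,q}$ are defined by \[ \frac{q-1+\frac{q-1}{\log q}\cdot\frac12\log(1-4t)}{q\sqrt{1-4t}-1}=\sum_{n=0}^{\infty}d_{n,q}t^n, \] and the ($q$-analogue) Catalan–Daehee polynomials $d_{n,q}(x)$ are defined by \[ \frac{q-1+\frac{q-1}{\log q}\cdot\frac12\log(1-4t)}{q\sqrt{1-4t}-1}(1-4t)^{x/2}=\sum_{n=0}^{\infty}d_{n,q}(x)t^n, \] for $t\in\mathbb{C}_p$ with $|t|_p<p^{-1/(p-1)}$, where $(1-4t)^{x/2}=\exp\big(\tfrac{x}{2}\log(1-4t)\big)$. $S_1(m,l)$ are the Stirling numbers of the first kind: $(x)_m=\sum_{l=0}^m S_1(m,l)x^l$, with $(x)_0=1$, $(x)_m=x(x-1)\cdots(x-m+1)$. *)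

theory Defs
  imports "HOL-Computational_Algebra.Computational_Algebra"
begin

text \<open>Stirling numbers of the first kind (signed):
  (x)_m = \<Sum>l. S1 m l * x^l, (x)_m = x(x-1)...(x-m+1).\<close>
definition S1 :: "nat \<Rightarrow> nat \<Rightarrow> int" where
  "S1 m l = coeff (\<Prod>i<m. [:- of_nat i, 1:]) l"

definition log_1m4t :: "'a::field_char_0 fps" where
  "log_1m4t = fps_ln 1 oo (- fps_const 4 * fps_X)"

definition pow_1m4t :: "'a::field_char_0 \<Rightarrow> 'a fps" where
  "pow_1m4t a = fps_exp 1 oo (fps_const a * log_1m4t)"

text \<open>Generating function of d_{n,q}; lq plays the role of log q.\<close>
definition gen_d :: "'a::field_char_0 \<Rightarrow> 'a \<Rightarrow> 'a fps" where
  "gen_d q lq = (fps_const (q - 1) + fps_const ((q - 1) / lq) * fps_const (1/2) * log_1m4t)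
                / (fps_const q * pow_1m4t (1/2) - 1)"

definition d_num :: "nat \<Rightarrow> 'a::field_char_0 \<Rightarrow> 'a \<Rightarrow> 'a" where
  "d_num n q lq = gen_d q lq $ n"

definition d_poly :: "nat \<Rightarrow> 'a::field_char_0 \<Rightarrow> 'a \<Rightarrow> 'a \<Rightarrow> 'a" where
  "d_poly n q lq x = (gen_d q lq * pow_1m4t (x / 2)) $ n"

end

theory Submission
  imports Defs
begin
lemma L1: "fps_exp 1 oo (fps_const (a::'a::field_char_0) * fps_ln 1) = fps_binomial a"
proof -
  let ?E = "fps_exp 1 oo (fps_const a * fps_ln 1)"
  have g0: "(fps_const a * fps_ln 1) $ 0 = 0" by simp
  have "fps_deriv ?E = fps_const a * ?E / (1 + fps_X)"
    apply (subst fps_compose_deriv[OF g0])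
    by (simp add: fps_ln_deriv fps_divide_def)
  moreover have "?E $ 0 = 1" by (simp add: fps_compose_nth)
  ultimately show ?thesis using fps_binomial_ODE_unique' by blast
qed
lemma L2: "pow_1m4t (a::'a::field_char_0) $ m = (a gchoose m) * (-4)^m"
proof -
  have "pow_1m4t a = fps_exp 1 oo ((fps_const a * fps_ln 1) oo (fps_const (-4) * fps_X))"
    unfolding pow_1m4t_def log_1m4t_def by (simp add: fps_const_mult_apply_left fps_const_neg)
  also have "\<dots> = fps_binomial a oo (fps_const (-4) * fps_X)"
    by (subst fps_compose_assoc) (simp_all add: L1)
  finally show ?thesis by (simp add: fps_compose_linear)
qed

lemma map_of_int_step:
  "poly (map_poly (of_int :: int \<Rightarrow> 'a::comm_ring_1) (p * [:a,1:])) y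
     = poly (map_poly of_int p) y * (y + of_int a)"
proof -
  have "map_poly (of_int :: int \<Rightarrow> 'a) (p * [:a,1:]) = smult (of_int a) (map_poly of_int p) + pCons 0 (map_poly of_int p)"
    by (rule poly_eqI) (auto simp: mult_pCons_right coeff_map_poly coeff_pCons split: nat.split)
  then show ?thesis by (simp add: algebra_simps)
qed

lemma prod_poly_eval:
  "poly (map_poly (of_int :: int \<Rightarrow> 'a::comm_ring_1) (\<Prod>i<m. [:- of_nat i, 1:])) y = (\<Prod>i<m. y - of_nat i)"
proof (induction m)
  case 0 then show ?case by simp
next
  case (Suc m)
  have "(\<Prod>i<Suc m. [:- of_nat i, 1:]) = (\<Prod>i<m. [:- of_nat i, 1:]) * [:- of_nat m, 1::int:]"
    by simp
  then show ?case using Suc by (simp only: map_of_int_step) simp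
qed

lemma deg_P: "degree (\<Prod>i<m. [:- of_nat i, 1::int:]) \<le> m"
proof -
  have "degree (\<Prod>i<m. [:- of_nat i, 1::int:]) \<le> (\<Sum>i<m. degree [:- of_nat i, 1::int:])"
    using degree_prod_sum_le[of "{..<m}" "\<lambda>i. [:- of_nat i, 1::int:]"] by (simp add: o_def)
  also have "\<dots> \<le> m" by simp
  finally show ?thesis .
qed

lemma L3: "(y gchoose m) * fact m = (\<Sum>l\<le>m. of_int (S1 m l) * (y::'a::field_char_0)^l)"
proof -
  let ?P = "\<Prod>i<m. [:- of_nat i, 1::int:]"
  have dq: "degree (map_poly (of_int :: int \<Rightarrow> 'a) ?P) \<le> m"
    using deg_P by (subst degree_map_poly) auto
  have "(y gchoose m) * fact m = (\<Prod>i<m. y - of_nat i)"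
    by (simp add: gbinomial_mult_fact' atLeast0LessThan)
  also have "\<dots> = poly (map_poly of_int ?P) y" by (simp add: prod_poly_eval)
  also have "\<dots> = poly (\<Sum>i\<le>m. monom (coeff (map_poly (of_int :: int \<Rightarrow> 'a) ?P) i) i) y"
    by (simp add: poly_as_sum_of_monoms'[OF dq])
  also have "\<dots> = (\<Sum>l\<le>m. of_int (S1 m l) * y^l)"
    by (simp add: poly_sum poly_monom S1_def coeff_map_poly)
  finally show ?thesis .
qed

lemma swap_tri: "(\<Sum>m=0..(n::nat). \<Sum>l=0..m. f m l) = (\<Sum>l=0..n. \<Sum>m=l..n. (f m l :: 'a::comm_monoid_add))"
proof -
  have "(\<Sum>m=0..n. \<Sum>l=0..m. f m l) = (\<Sum>m=0..n. \<Sum>l=0..n. if l \<le> m then f m l else 0)"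
  proof (rule sum.cong[OF refl])
    fix m assume "m \<in> {0..n}"
    then have "{l\<in>{0..n}. l \<le> m} = {0..m}" by (auto simp: atLeastAtMost_iff)
    then show "(\<Sum>l=0..m. f m l) = (\<Sum>l=0..n. if l \<le> m then f m l else 0)"
      by (simp only: sum.inter_filter[OF finite_atLeastAtMost, symmetric])
  qed
  also have "\<dots> = (\<Sum>l=0..n. \<Sum>m=0..n. if l \<le> m then f m l else 0)" by (rule sum.swap)
  also have "\<dots> = (\<Sum>l=0..n. \<Sum>m=l..n. f m l)"
  proof (rule sum.cong[OF refl])
    fix l assume "l \<in> {0..n}"
    then have "{m\<in>{0..n}. l \<le> m} = {l..n}" by auto
    then show "(\<Sum>m=0..n. if l \<le> m then f m l else 0) = (\<Sum>m=l..n. f m l)"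
      by (simp only: sum.inter_filter[OF finite_atLeastAtMost, symmetric])
  qed
  finally show ?thesis .
qed

lemma coeffpow: "pow_1m4t ((x::'a::field_char_0)/2) $ m = (\<Sum>l=0..m. (-1)^m * 2^(2*m-l) / fact m * of_int (S1 m l) * x^l)"
proof -
  have "pow_1m4t (x/2) $ m = (-4)^m / fact m * ((x/2 gchoose m) * fact m)"
    by (simp add: L2)
  also have "\<dots> = (-4)^m / fact m * (\<Sum>l\<le>m. of_int (S1 m l) * (x/2)^l)" by (simp add: L3)
  also have "\<dots> = (\<Sum>l=0..m. (-1)^m * 2^(2*m-l) / fact m * of_int (S1 m l) * x^l)"
    unfolding sum_distrib_left atMost_atLeast0
  proof (rule sum.cong[OF refl])
    fix l assume "l \<in> {0..m}"
    then have "(2::'a)^(2*m-l) * 2^l = 4^m" by (simp add: power_add[symmetric] power_mult)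
    then have e: "(2::'a)^(2*m-l) = 4^m / 2^l" by (simp add: field_simps)
    have "(-4::'a)^m = (-1)^m * 4^m" by (simp add: power_minus[of 4])
    then show "(-4)^m / fact m * (of_int (S1 m l) * (x/2)^l) = (-1)^m * 2^(2*m-l) / fact m * of_int (S1 m l) * x^l"
      by (simp only: e power_divide) (simp add: field_simps)
  qed
  finally show ?thesis .
qed

theorem theorem5:
  fixes q lq x :: "'a::field_char_0" and n :: nat
  assumes "q \<noteq> 1" and "lq \<noteq> 0"
  shows "d_poly n q lq x =
    (\<Sum>l=0..n. (\<Sum>m=l..n. (-1)^m * 2^(2*m-l) / fact m * of_int (S1 m l) * d_num (n - m) q lq) * x^l)"
proof -
  have "d_poly n q lq x = (\<Sum>m=0..n. pow_1m4t (x/2) $ m * d_num (n - m) q lq)"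
    unfolding d_poly_def d_num_def by (simp add: mult.commute[of "gen_d q lq"] fps_mult_nth)
  also have "\<dots> = (\<Sum>m=0..n. \<Sum>l=0..m. (-1)^m * 2^(2*m-l) / fact m * of_int (S1 m l) * d_num (n - m) q lq * x^l)"
    unfolding coeffpow sum_distrib_right by (rule sum.cong[OF refl], rule sum.cong[OF refl]) (simp add: field_simps)
  also have "\<dots> = (\<Sum>l=0..n. \<Sum>m=l..n. (-1)^m * 2^(2*m-l) / fact m * of_int (S1 m l) * d_num (n - m) q lq * x^l)"
    by (rule swap_tri)
  also have "\<dots> = (\<Sum>l=0..n. (\<Sum>m=l..n. (-1)^m * 2^(2*m-l) / fact m * of_int (S1 m l) * d_num (n - m) q lq) * x^l)"
    by (simp add: sum_distrib_right)
  finally show ?thesis .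
qed

end
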